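(* Let $p, r \in \mathbb N$ and $S(p,r,1):=\sum_{n=1}^\infty \frac{(-1)^{n+1}H_n^{(p)}}{n+r}$. Then \begin{align*} S(p,r,1) &=(-1)^{r}S_{p,1}^{+,-}+(-1)^{r-1}\overline{\zeta}(p+1) +\sum_{j=1}^{p}(-1)^{p-j+r}\overline{\zeta}(j)\overline{H}_{r-1}^{(p-j+1)}\\ &\quad +(-1)^{p+r-1}\overline{\zeta}(1)H_{r-1}^{(p)} +(-1)^{p+r}\sum_{n=1}^{r-1}\frac{\overline{H}_{n}}{n^{p}}\,. \end{align*}
   Context: $H_n^{(q)}=\sum_{j=1}^n j^{-q}$, $\overline{H}_n^{(q)}=\sum_{j=1}^n (-1)^{j-1}j^{-q}$, $\overline{H}_n=\overline{H}_n^{(1)}$, with value $0$ for $n=0$. $\overline{\zeta}(s)=\sum_{n\ge1}(-1)^{n-1}n^{-s}$, so $\overline{\zeta}(1)=\log2$. $S_{p,q}^{+,-}:=\sum_{n=1}^\infty (-1)^{n-1}H_n^{(p)}/n^q$. Empty sums are $0$. *)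

theory Defs
  imports Complex_Main
begin

definition harm_gen :: "nat \<Rightarrow> nat \<Rightarrow> real" where
  "harm_gen q n = (\<Sum>j=1..n. 1 / real j ^ q)"

definition alt_harm :: "nat \<Rightarrow> nat \<Rightarrow> real" where
  "alt_harm q n = (\<Sum>j=1..n. (-1) ^ (j - 1) / real j ^ q)"

definition altzeta :: "nat \<Rightarrow> real" where
  "altzeta s = (\<Sum>n. (-1) ^ n / real (Suc n) ^ s)"

text \<open>S_{p,q}^{+,-} = sum_{n>=1} (-1)^(n-1) H_n^(p) / n^q.\<close>
definition S_pm :: "nat \<Rightarrow> nat \<Rightarrow> real" where
  "S_pm p q = (\<Sum>n. (-1) ^ n * harm_gen p (Suc n) / real (Suc n) ^ q)"

end

theory Submission
  imports Defs "HOL-Analysis.Analysis"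
begin

lemma neg1sq: "(-1::real) ^ m * ((-1) ^ m * x) = x"
  by (simp flip: mult.assoc power_add add: power_even_eq[symmetric] mult_2[symmetric])

lemma harm_gen_Suc: "harm_gen p (Suc n) = harm_gen p n + 1 / real (Suc n) ^ p"
  by (simp add: harm_gen_def)

lemma harm_gen_nonneg: "0 \<le> harm_gen p n"
  by (simp add: harm_gen_def sum_nonneg)

lemma harm_gen_ge1: "1 \<le> harm_gen p (Suc n)"
proof (induction n)
  case 0 then show ?case by (simp add: harm_gen_def)
next
  case (Suc n)
  have "0 \<le> 1 / real (Suc (Suc n)) ^ p" by simp
  with Suc show ?case unfolding harm_gen_Suc[of p "Suc n"] by linarith
qed

lemma harm_gen_le_harm: "p \<ge> 1 \<Longrightarrow> harm_gen p n \<le> harm n"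
  unfolding harm_gen_def harm_def
proof (rule sum_mono)
  fix j assume "p \<ge> 1" "j \<in> {1..n}"
  then have "real j \<le> real j ^ p" "real j \<ge> 1"
    by (auto intro: self_le_power)
  then show "1 / real j ^ p \<le> inverse (real j)"
    by (simp add: divide_simps)
qed

lemma harm_Suc_le: "harm (Suc n) \<le> 1 + ln (real (Suc n))"
proof -
  have "harm (Suc n) - ln (real (Suc n)) \<le> harm (Suc 0) - ln (real (Suc 0))"
    using decseq_harm_diff_ln unfolding decseq_def by blast
  then show ?thesis by (simp add: harm_def)
qed

lemma altzeta_sums: "j \<ge> 1 \<Longrightarrow> (\<lambda>n. (-1) ^ n / real (Suc n) ^ j) sums altzeta j"
proof -
  assume j: "j \<ge> 1"
  have "summable (\<lambda>n. (-1) ^ n * (1 / real (Suc n) ^ j))"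
  proof (rule summable_Leibniz')
    have "(\<lambda>n. inverse (real (Suc n)) ^ j) \<longlonglongrightarrow> 0 ^ j"
      by (intro tendsto_power LIMSEQ_inverse_real_of_nat)
    moreover have "(0::real) ^ j = 0" using j by simp
    ultimately show "(\<lambda>n. 1 / real (Suc n) ^ j) \<longlonglongrightarrow> 0"
      by (simp only: power_one_over inverse_eq_divide)
    show "\<And>n. 0 \<le> 1 / real (Suc n) ^ j" by simp
    show "\<And>n. 1 / real (Suc (Suc n)) ^ j \<le> 1 / real (Suc n) ^ j"
      by (intro divide_left_mono power_mono) auto
  qed
  then show ?thesis unfolding altzeta_def by (simp add: summable_sums)
qed

lemma S_sums: "p \<ge> 1 \<Longrightarrow> (\<lambda>n. (-1) ^ n * harm_gen p (Suc n) / real (Suc n + 0)) sums S_pm p 1"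
proof -
  assume p: "p \<ge> 1"
  have lim: "(\<lambda>n. harm_gen p (Suc n) / real (Suc n)) \<longlonglongrightarrow> 0"
  proof (rule tendsto_sandwich[where f="\<lambda>n. 0" and h="\<lambda>n. (1 + ln (real (Suc n))) / real (Suc n)"])
    show "\<forall>\<^sub>F n in sequentially. 0 \<le> harm_gen p (Suc n) / real (Suc n)"
      by (simp add: harm_gen_nonneg)
    show "\<forall>\<^sub>F n in sequentially. harm_gen p (Suc n) / real (Suc n) \<le> (1 + ln (real (Suc n))) / real (Suc n)"
      using harm_gen_le_harm[OF p] harm_Suc_le
      by (intro always_eventually allI divide_right_mono) (auto intro: order_trans)
    have "(\<lambda>n. 1 / real n + ln (real n) / real n) \<longlonglongrightarrow> 0"
      using tendsto_add[OF lim_1_over_n lim_ln_over_n] by simp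
    then have "(\<lambda>n. 1 / real (Suc n) + ln (real (Suc n)) / real (Suc n)) \<longlonglongrightarrow> 0"
      by (rule LIMSEQ_Suc)
    then show "(\<lambda>n. (1 + ln (real (Suc n))) / real (Suc n)) \<longlonglongrightarrow> 0"
      by (simp add: add_divide_distrib del: of_nat_Suc)
  qed simp
  have "summable (\<lambda>n. (-1) ^ n * (harm_gen p (Suc n) / real (Suc n)))"
  proof (rule summable_Leibniz'[OF lim])
    show "\<And>n. 0 \<le> harm_gen p (Suc n) / real (Suc n)" by (simp add: harm_gen_nonneg)
    fix n
    have "Suc (Suc n) \<le> Suc (Suc n) ^ p" using p by (intro self_le_power) auto
    then have "Suc n \<le> Suc (Suc n) ^ p" by linarith
    then have "real (Suc n) \<le> real (Suc (Suc n)) ^ p"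
      by (simp only: of_nat_power[symmetric] of_nat_le_iff)
    have x: "1 * real (Suc (Suc n)) ^ p \<le> harm_gen p (Suc n) * real (Suc (Suc n)) ^ p"
      by (rule mult_right_mono[OF harm_gen_ge1]) simp
    have "real (Suc n) / real (Suc (Suc n)) ^ p \<le> harm_gen p (Suc n)"
    proof (subst pos_divide_le_eq)
      show "0 < real (Suc (Suc n)) ^ p" by simp
      show "real (Suc n) \<le> harm_gen p (Suc n) * real (Suc (Suc n)) ^ p"
        using \<open>real (Suc n) \<le> _\<close> x by linarith
    qed
    then show "harm_gen p (Suc (Suc n)) / real (Suc (Suc n)) \<le> harm_gen p (Suc n) / real (Suc n)"
      by (simp add: harm_gen_Suc[of p "Suc n"] divide_simps del: of_nat_Suc) (simp add: algebra_simps)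
  qed
  then show ?thesis unfolding S_pm_def by (simp add: summable_sums)
qed

lemma pf: fixes x k :: real assumes "x > 0" "k > 0"
  shows "1 / (x ^ p * (x + k)) = (\<Sum>i<p. (-1) ^ i / k ^ (i + 1) * (1 / x ^ (p - i))) + (-1) ^ p / k ^ p * (1 / (x + k))"
proof (induction p)
  case 0 then show ?case by simp
next
  case (Suc p)
  have e: "1 / (x * (x + k)) = 1 / k * (1 / x) - 1 / k * (1 / (x + k))"
  proof -
    have "x \<noteq> 0" "k \<noteq> 0" "x + k \<noteq> 0" using assms by auto
    then show ?thesis by (simp add: divide_simps)
  qed
  have "1 / (x ^ Suc p * (x + k)) = 1 / x * (1 / (x ^ p * (x + k)))" by simp
  also have "\<dots> = (\<Sum>i<p. (-1) ^ i / k ^ (i + 1) * (1 / x ^ (Suc p - i))) + (-1) ^ p / k ^ p * (1 / (x * (x + k)))"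
    unfolding Suc sum_distrib_left
    by (simp add: Suc_diff_le algebra_simps sum_divide_distrib)
  also have "\<dots> = (\<Sum>i<Suc p. (-1) ^ i / k ^ (i + 1) * (1 / x ^ (Suc p - i))) + (-1) ^ Suc p / k ^ Suc p * (1 / (x + k))"
    unfolding e using assms by (simp add: algebra_simps)
  finally show ?case .
qed

lemma alt_harm1_eq: "alt_harm 1 k = (\<Sum>i<k. (-1) ^ i / real (Suc i) ^ 1)"
  by (induction k) (simp_all add: alt_harm_def)

lemma D_sums: "(\<lambda>m. (-1) ^ m / real (Suc m + k)) sums ((-1) ^ k * (altzeta 1 - alt_harm 1 k))"
proof -
  let ?f = "\<lambda>n. (-1) ^ n / real (Suc n) ^ 1"
  have "(\<lambda>i. ?f (i + k)) sums (altzeta 1 - (\<Sum>i<k. ?f i))"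
    using altzeta_sums[of 1] sums_iff_shift[of ?f k] by simp
  then have "(\<lambda>i. (-1) ^ k * ?f (i + k)) sums ((-1) ^ k * (altzeta 1 - alt_harm 1 k))"
    unfolding alt_harm1_eq by (intro sums_mult)
  moreover have "(\<lambda>i. (-1) ^ k * ?f (i + k)) = (\<lambda>m. (-1) ^ m / real (Suc m + k))"
  proof
    fix i
    have "(-1::real) ^ k * (-1) ^ (i + k) = (-1) ^ k * ((-1) ^ k * (-1) ^ i)"
      by (simp add: power_add mult.commute)
    also have "\<dots> = (-1) ^ i" by (rule neg1sq)
    finally have "(-1::real) ^ k * (-1) ^ (i + k) = (-1) ^ i" .
    then show "(-1) ^ k * ?f (i + k) = (-1) ^ i / real (Suc i + k)"
      by (simp add: field_simps)
  qed
  ultimately show ?thesis by simp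
qed

definition Cv :: "nat \<Rightarrow> nat \<Rightarrow> real" where
  "Cv p k = (if k = 0 then altzeta (p + 1) else
     (\<Sum>i<p. (-1) ^ i / real k ^ (i + 1) * altzeta (p - i))
       + (-1) ^ p / real k ^ p * ((-1) ^ k * (altzeta 1 - alt_harm 1 k)))"

lemma c_sums:
  assumes p: "p \<ge> 1"
  shows "(\<lambda>m. (-1) ^ m / (real (Suc m) ^ p * real (Suc m + k))) sums Cv p k"
proof (cases "k = 0")
  case True
  have "(\<lambda>m. (-1) ^ m / (real (Suc m) ^ p * real (Suc m + k))) = (\<lambda>n. (-1) ^ n / real (Suc n) ^ (p + 1))"
    using True by (simp add: mult.commute)
  then show ?thesis using True altzeta_sums[of "p + 1"] by (simp add: Cv_def)
next
  case False
  have eq: "(\<lambda>m. (-1) ^ m / (real (Suc m) ^ p * real (Suc m + k))) =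
    (\<lambda>m. (\<Sum>i<p. (-1) ^ i / real k ^ (i + 1) * ((-1) ^ m / real (Suc m) ^ (p - i)))
       + (-1) ^ p / real k ^ p * ((-1) ^ m / real (Suc m + k)))"
  proof
    fix m
    have "1 / (real (Suc m) ^ p * (real (Suc m) + real k)) = (\<Sum>i<p. (-1) ^ i / real k ^ (i + 1) * (1 / real (Suc m) ^ (p - i))) + (-1) ^ p / real k ^ p * (1 / (real (Suc m) + real k))"
      by (rule pf) (use False in auto)
    then have "(-1) ^ m * (1 / (real (Suc m) ^ p * (real (Suc m) + real k))) = (-1) ^ m * ((\<Sum>i<p. (-1) ^ i / real k ^ (i + 1) * (1 / real (Suc m) ^ (p - i))) + (-1) ^ p / real k ^ p * (1 / (real (Suc m) + real k)))"
      by simp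
    then show "(-1) ^ m / (real (Suc m) ^ p * real (Suc m + k)) = (\<Sum>i<p. (-1) ^ i / real k ^ (i + 1) * ((-1) ^ m / real (Suc m) ^ (p - i)))
       + (-1) ^ p / real k ^ p * ((-1) ^ m / real (Suc m + k))"
      by (simp only: distrib_left sum_distrib_left of_nat_add) (simp add: algebra_simps)
  qed
  have "(\<lambda>m. (\<Sum>i<p. (-1) ^ i / real k ^ (i + 1) * ((-1) ^ m / real (Suc m) ^ (p - i)))
       + (-1) ^ p / real k ^ p * ((-1) ^ m / real (Suc m + k))) sums
     ((\<Sum>i<p. (-1) ^ i / real k ^ (i + 1) * altzeta (p - i))
       + (-1) ^ p / real k ^ p * ((-1) ^ k * (altzeta 1 - alt_harm 1 k)))"
    by (intro sums_add sums_sum sums_mult altzeta_sums D_sums) auto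
  then show ?thesis using False by (simp only: eq Cv_def if_False)
qed

lemma step_sums:
  assumes "(\<lambda>n. (-1) ^ n * harm_gen p (Suc n) / real (Suc n + r)) sums T" "p \<ge> 1"
  shows "(\<lambda>n. (-1) ^ n * harm_gen p (Suc n) / real (Suc n + Suc r)) sums (- T + Cv p r)"
proof -
  let ?b = "\<lambda>n. (-1) ^ n * harm_gen p (Suc n) / real (Suc n + r)"
  let ?c = "\<lambda>m. (-1) ^ m / (real (Suc m) ^ p * real (Suc m + r))"
  have b0: "?b 0 = 1 / real (Suc r)" by (simp add: harm_gen_def)
  have c0: "?c 0 = 1 / real (Suc r)" by simp
  have "(\<lambda>n. ?b (Suc n)) sums (T - ?b 0)"
    using assms(1) sums_Suc_iff[of ?b "T - ?b 0"] by simp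
  moreover have "(\<lambda>n. ?c (Suc n)) sums (Cv p r - ?c 0)"
    using c_sums[OF assms(2), of r] sums_Suc_iff[of ?c "Cv p r - ?c 0"] by simp
  ultimately have "(\<lambda>n. - ?b (Suc n) + ?c (Suc n)) sums (- (T - ?b 0) + (Cv p r - ?c 0))"
    by (intro sums_add sums_minus)
  moreover have "(\<lambda>n. - ?b (Suc n) + ?c (Suc n)) = (\<lambda>n. (-1) ^ n * harm_gen p (Suc n) / real (Suc n + Suc r))"
  proof
    fix n
    have pos: "real (Suc (Suc n)) ^ p > 0" "real (Suc (Suc n) + r) > 0" by auto
    show "- ?b (Suc n) + ?c (Suc n) = (-1) ^ n * harm_gen p (Suc n) / real (Suc n + Suc r)"
      unfolding harm_gen_Suc[of p "Suc n"] using pos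
      by (simp add: divide_simps del: of_nat_Suc of_nat_add) (simp add: algebra_simps)
  qed
  ultimately show ?thesis using b0 c0 by simp
qed

fun V :: "nat \<Rightarrow> nat \<Rightarrow> real" where
  "V p 0 = S_pm p 1"
| "V p (Suc r) = - V p r + Cv p r"

lemma V_sums: "p \<ge> 1 \<Longrightarrow> (\<lambda>n. (-1) ^ n * harm_gen p (Suc n) / real (Suc n + r)) sums V p r"
proof (induction r)
  case 0 then show ?case using S_sums by simp
next
  case (Suc r) then show ?case using step_sums by simp
qed

definition R :: "nat \<Rightarrow> nat \<Rightarrow> real" where
  "R p r = ((-1) ^ r * S_pm p 1 + (-1) ^ (r - 1) * altzeta (p + 1)
      + (\<Sum>j=1..p. (-1) ^ (p - j + r) * altzeta j * alt_harm (p - j + 1) (r - 1))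
      + (-1) ^ (p + r - 1) * altzeta 1 * harm_gen p (r - 1)
      + (-1) ^ (p + r) * (\<Sum>n=1..r-1. alt_harm 1 n / real n ^ p))"

lemma alt_harm_Suc: "alt_harm q (Suc m) = alt_harm q m + (-1) ^ m / real (Suc m) ^ q"
  by (simp add: alt_harm_def)

lemma reidx: "(\<Sum>i<p. g (p - i)) = (\<Sum>j=1..p. g j)" for g :: "nat \<Rightarrow> real"
  by (rule sum.reindex_bij_witness[of _ "\<lambda>j. p - j" "\<lambda>i. p - i"]) auto

lemma R_step: "R p (Suc (Suc m)) = - R p (Suc m) + Cv p (Suc m)"
proof -
  let ?k = "real (Suc m)"
  have s1: "(\<Sum>j=1..p. (-1) ^ (p - j + Suc (Suc m)) * altzeta j * alt_harm (p - j + 1) (Suc m))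
     = - (\<Sum>j=1..p. (-1) ^ (p - j + Suc m) * altzeta j * alt_harm (p - j + 1) m)
       + (\<Sum>j=1..p. (-1) ^ (p - j) / ?k ^ (p - j + 1) * altzeta j)"
    unfolding sum_negf[symmetric] sum.distrib[symmetric]
  proof (intro sum.cong refl)
    fix j assume "j \<in> {1..p}"
    then obtain d where d: "p = j + d" by (metis atLeastAtMost_iff le_add_diff_inverse)
    show "(-1) ^ (p - j + Suc (Suc m)) * altzeta j * alt_harm (p - j + 1) (Suc m) =
      - ((-1) ^ (p - j + Suc m) * altzeta j * alt_harm (p - j + 1) m) + (-1) ^ (p - j) / ?k ^ (p - j + 1) * altzeta j"
      unfolding d by (simp add: alt_harm_Suc power_add algebra_simps neg1sq del: of_nat_Suc)
  qed
  have s2: "(\<Sum>i<p. (-1) ^ i / ?k ^ (i + 1) * altzeta (p - i)) = (\<Sum>j=1..p. (-1) ^ (p - j) / ?k ^ (p - j + 1) * altzeta j)"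
    by (subst reidx[symmetric]) (intro sum.cong refl, simp)
  have s3: "(\<Sum>n=1..Suc m. alt_harm 1 n / real n ^ p) = (\<Sum>n=1..m. alt_harm 1 n / real n ^ p) + alt_harm 1 (Suc m) / ?k ^ p"
    by simp
  have RSS: "R p (Suc (Suc m)) = (-1) ^ m * S_pm p 1 + (-1) ^ Suc m * altzeta (p + 1)
      + (\<Sum>j=1..p. (-1) ^ (p - j + Suc (Suc m)) * altzeta j * alt_harm (p - j + 1) (Suc m))
      + (-1) ^ (p + Suc m) * altzeta 1 * harm_gen p (Suc m)
      + (-1) ^ (p + m) * (\<Sum>n=1..Suc m. alt_harm 1 n / real n ^ p)"
    unfolding R_def by simp
  have RS: "R p (Suc m) = (-1) ^ Suc m * S_pm p 1 + (-1) ^ m * altzeta (p + 1)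
      + (\<Sum>j=1..p. (-1) ^ (p - j + Suc m) * altzeta j * alt_harm (p - j + 1) m)
      + (-1) ^ (p + m) * altzeta 1 * harm_gen p m
      + (-1) ^ (p + Suc m) * (\<Sum>n=1..m. alt_harm 1 n / real n ^ p)"
    unfolding R_def by simp
  have CS: "Cv p (Suc m) = (\<Sum>j=1..p. (-1) ^ (p - j) / ?k ^ (p - j + 1) * altzeta j)
     + (-1) ^ p / ?k ^ p * ((-1) ^ Suc m * (altzeta 1 - alt_harm 1 (Suc m)))"
    unfolding Cv_def s2 by simp
  show ?thesis
    unfolding RSS RS CS s1 s3 harm_gen_Suc
    by (simp add: power_add algebra_simps del: of_nat_Suc)
qed

lemma V_R: "V p (Suc m) = R p (Suc m)"
proof (induction m)
  case 0 then show ?case by (simp add: R_def Cv_def alt_harm_def harm_gen_def)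
next
  case (Suc m) then show ?case using R_step[of p m] by simp
qed

theorem lemma3:
  fixes p r :: nat
  assumes "p \<ge> 1" and "r \<ge> 1"
  shows "(\<lambda>n. (-1) ^ n * harm_gen p (Suc n) / real (Suc n + r)) sums
     ((-1) ^ r * S_pm p 1 + (-1) ^ (r - 1) * altzeta (p + 1)
      + (\<Sum>j=1..p. (-1) ^ (p - j + r) * altzeta j * alt_harm (p - j + 1) (r - 1))
      + (-1) ^ (p + r - 1) * altzeta 1 * harm_gen p (r - 1)
      + (-1) ^ (p + r) * (\<Sum>n=1..r-1. alt_harm 1 n / real n ^ p))"
proof -
  obtain m where m: "r = Suc m" using assms(2) by (cases r) auto
  have "V p r = R p r" unfolding m by (rule V_R)
  then show ?thesis using V_sums[OF assms(1), of r] unfolding R_def by simp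
qed

end
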